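(* Let $\Psi$ be a finite set of contexts, $\psi_t$ a target context, and $D$ a distribution such that $D(x\mid\psi)>0$ for all $\psi\in\Psi$ and $x\models\psi$, and such that $\Psi$ is representative for $\psi_t$ with respect to every $h\in\mathcal{H}$. Then for every $\epsilon,\delta\in(0,1)$ there exist integers $t_\psi(\epsilon,\delta)$, $\psi\in\Psi$, such that if the training set $S$ contains, for every $\psi\in\Psi$, at least $t_\psi(\epsilon,\delta)$ examples with context $\psi$ (drawn i.i.d. from $D(x,y\mid\psi)$), then any $h\in\mathcal{H}$ minimizing $\sum_{\psi\in\Psi}L_{S,\psi}(h)$ satisfies $$\Pr\Big(L_{D,\psi_t}(h)>\min_{h'\in\mathcal{H}}\sum_{\psi\in\Psi}L_{S,\psi}(h')+\epsilon\Big)<\delta.$$ In particular, in the realizable setting (where some $h'\in\mathcal{H}$ has $\sum_{\psi}L_{S,\psi}(h')=0$) this gives $\Pr(L_{D,\psi_t}(h)>\epsilon)<\delta$.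
   Context: Let $X_1,\dots,X_n$ be Boolean variables and $\Phi=\{\phi_1,\dots,\phi_m\}$ candidate formulas; $\phi(c)=\bigwedge_{j:c_j=1}\phi_j$ for $c\in\{0,1\}^m$, $f_w(x)=\sum_jw_j\mathbb{1}[x\models\phi_j]$ for $w\in[-1,1]^m$. A context is a Boolean formula. The MAX-SAT classifier $h_{c,w}(x,\psi)=1$ iff $x\models\phi(c)\wedge\psi$ and $f_w(x)\ge f_w(x')$ for all $x'\models\phi(c)\wedge\psi$, else $0$; $\mathcal{H}$ is the set of these. A ground-truth $h^*\in\mathcal{H}$ labels examples, $y=h^*(x,\psi)$. $D(x\mid\psi)$ is a distribution over assignments satisfying $\psi$; $L_{D,\psi}(h)=\sum_x\mathbb{1}[h(x,\psi)\neq h^*(x,\psi)]D(x\mid\psi)$. For the training set $S$ of triples $(\psi_k,x_k,y_k)$, and $S_\psi$ the examples in $S$ with context $\psi$, $L_{S,\psi}(h)=\frac{1}{|S_\psi|}\sum_{(\psi,x,y)\in S_\psi}\mathbb{1}[h(x,\psi)\neq y]$. Representativeness: for $h\in\mathcal{H}$, let $\chi(\psi,x,\psi')$ hold iff $x\models\psi\wedge\psi'$ and ($h(x,\psi)\neq h^*(x,\psi)\Rightarrow h(x,\psi')\neq h^*(x,\psi')$); $\#(\psi,x)=|\{\psi'\in\Psi:\chi(\psi,x,\psi')\}|$; $\Psi$ is representative for $\psi_t$ w.r.t. $h$ iff $\#(\psi_t,x)>0$ for all assignments $x$. *)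

theory Defs
  imports "HOL-Probability.Probability"
begin

text \<open>Boolean formulas over variables of type 'v (the variables X_1..X_n;
  n = CARD('v)). An assignment is a function 'v => bool.\<close>

datatype 'v form =
    TT | FF | Var 'v | Neg "'v form" | Conj "'v form" "'v form" | Disj "'v form" "'v form"

fun models :: "('v \<Rightarrow> bool) \<Rightarrow> 'v form \<Rightarrow> bool" where
  "models x TT = True"
| "models x FF = False"
| "models x (Var v) = x v"
| "models x (Neg p) = (\<not> models x p)"
| "models x (Conj p q) = (models x p \<and> models x q)"
| "models x (Disj p q) = (models x p \<or> models x q)"

text \<open>phi(c) = conjunction of the phi_j with c_j = 1 (empty conjunction = TT).
  Candidate formulas Phi are the list phis of length m.\<close>
definition phi_c :: "'v form list \<Rightarrow> bool list \<Rightarrow> 'v form" where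
  "phi_c phis c = foldr Conj [phis ! j. j \<leftarrow> [0..<length phis], c ! j] TT"

definition f_w :: "'v form list \<Rightarrow> real list \<Rightarrow> ('v \<Rightarrow> bool) \<Rightarrow> real" where
  "f_w phis w x = (\<Sum>j<length phis. w ! j * (if models x (phis ! j) then 1 else 0))"

definition maxsat_h :: "'v form list \<Rightarrow> bool list \<Rightarrow> real list \<Rightarrow> ('v \<Rightarrow> bool) \<Rightarrow> 'v form \<Rightarrow> bool" where
  "maxsat_h phis c w x psi =
     (models x (Conj (phi_c phis c) psi) \<and>
      (\<forall>x'. models x' (Conj (phi_c phis c) psi) \<longrightarrow> f_w phis w x' \<le> f_w phis w x))"

definition hyp_class :: "'v form list \<Rightarrow> (('v \<Rightarrow> bool) \<Rightarrow> 'v form \<Rightarrow> bool) set" where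
  "hyp_class phis = {maxsat_h phis c w | c w.
      length c = length phis \<and> length w = length phis \<and> set w \<subseteq> {-1..1}}"

text \<open>True loss L_{D,psi}(h); D psi is the distribution D(x | psi).\<close>
definition true_loss :: "('v::finite form \<Rightarrow> ('v \<Rightarrow> bool) pmf) \<Rightarrow>
    (('v \<Rightarrow> bool) \<Rightarrow> 'v form \<Rightarrow> bool) \<Rightarrow> 'v form \<Rightarrow> (('v \<Rightarrow> bool) \<Rightarrow> 'v form \<Rightarrow> bool) \<Rightarrow> real" where
  "true_loss D hstar psi h =
     (\<Sum>x\<in>UNIV. (if h x psi \<noteq> hstar x psi then 1 else 0) * pmf (D psi) x)"

text \<open>Training set: S psi is the list (multiset) of assignments x of the examples
  (psi, x, hstar(x,psi)) in S with context psi, i.e. S_psi.  Empirical loss L_{S,psi}(h).\<close>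
definition emp_loss :: "(('v \<Rightarrow> bool) \<Rightarrow> 'v form \<Rightarrow> bool) \<Rightarrow> ('v form \<Rightarrow> ('v \<Rightarrow> bool) list) \<Rightarrow>
    'v form \<Rightarrow> (('v \<Rightarrow> bool) \<Rightarrow> 'v form \<Rightarrow> bool) \<Rightarrow> real" where
  "emp_loss hstar S psi h =
     (\<Sum>x\<leftarrow>S psi. if h x psi \<noteq> hstar x psi then 1 else 0) / real (length (S psi))"

definition chi :: "(('v \<Rightarrow> bool) \<Rightarrow> 'v form \<Rightarrow> bool) \<Rightarrow> (('v \<Rightarrow> bool) \<Rightarrow> 'v form \<Rightarrow> bool) \<Rightarrow>
    'v form \<Rightarrow> ('v \<Rightarrow> bool) \<Rightarrow> 'v form \<Rightarrow> bool" where
  "chi hstar h psi x psi' =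
     (models x (Conj psi psi') \<and> (h x psi \<noteq> hstar x psi \<longrightarrow> h x psi' \<noteq> hstar x psi'))"

definition count_rep :: "'v form set \<Rightarrow> (('v \<Rightarrow> bool) \<Rightarrow> 'v form \<Rightarrow> bool) \<Rightarrow>
    (('v \<Rightarrow> bool) \<Rightarrow> 'v form \<Rightarrow> bool) \<Rightarrow> 'v form \<Rightarrow> ('v \<Rightarrow> bool) \<Rightarrow> nat" where
  "count_rep Psi hstar h psi x = card {psi' \<in> Psi. chi hstar h psi x psi'}"

definition representative :: "'v form set \<Rightarrow> 'v form \<Rightarrow> (('v \<Rightarrow> bool) \<Rightarrow> 'v form \<Rightarrow> bool) \<Rightarrow>
    (('v \<Rightarrow> bool) \<Rightarrow> 'v form \<Rightarrow> bool) \<Rightarrow> bool" where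
  "representative Psi psit hstar h = (\<forall>x. models x psit \<longrightarrow> count_rep Psi hstar h psit x > 0)"

text \<open>Distribution of the training set: for each psi in Psi, k psi i.i.d. draws from D(x | psi)
  (labels are determined by hstar); contexts outside Psi get no examples.\<close>
definition sample_pmf :: "'v form set \<Rightarrow> ('v form \<Rightarrow> ('v \<Rightarrow> bool) pmf) \<Rightarrow> ('v form \<Rightarrow> nat) \<Rightarrow>
    ('v form \<Rightarrow> ('v \<Rightarrow> bool) list) pmf" where
  "sample_pmf Psi D k = Pi_pmf Psi [] (\<lambda>psi. replicate_pmf (k psi) (D psi))"

end

theory Submission
  imports Defs
begin

lemma replicate_Suc_pair:
  "replicate_pmf (Suc n) p = map_pmf (\<lambda>(y,xs). y#xs) (pair_pmf p (replicate_pmf n p))"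
  by (simp add: pair_pmf_def map_pmf_def bind_assoc_pmf bind_return_pmf)

lemma prob_replicate_miss:
  fixes p :: "'a::countable pmf"
  shows "measure_pmf.prob (replicate_pmf n p) {xs. x \<notin> set xs} = (1 - pmf p x) ^ n"
proof (induction n)
  case 0
  then show ?case by simp
next
  case (Suc n)
  have pre: "(\<lambda>(y,xs). y#xs) -` {xs. x \<notin> set xs} = (UNIV - {x}) \<times> {xs. x \<notin> set xs}"
    by auto
  have c: "measure_pmf.prob p (UNIV - {x}) = 1 - pmf p x"
    using measure_pmf.prob_compl[of "{x}" p] by (simp add: measure_pmf_single Compl_eq_Diff_UNIV)
  show ?case
    unfolding replicate_Suc_pair measure_map_pmf pre
    by (subst measure_pmf_prob_product) (auto simp: c Suc)
qed

lemma emp_zero_agree: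
  fixes xs :: "'a list" and g :: "'a \<Rightarrow> real"
  assumes "(\<Sum>x\<leftarrow>xs. g x) / real (length xs) = 0" "\<And>x. g x \<ge> 0" "x \<in> set xs"
  shows "g x = 0"
proof -
  have "length xs > 0" using assms(3) by (cases xs) auto
  then have "(\<Sum>x\<leftarrow>xs. g x) = 0" using assms(1) by simp
  moreover have "\<And>y. y \<in> set (map g xs) \<Longrightarrow> 0 \<le> y" using assms(2) by auto
  ultimately have "\<forall>y\<in>set (map g xs). y = 0" using sum_list_nonneg_eq_0_iff[of "map g xs"] by blast
  then show ?thesis using assms(3) by simp
qed

lemma bad_subset:
  fixes phis :: "'v::finite form list"
  assumes hstar: "hstar \<in> hyp_class phis"
    and D_supp: "\<And>psi. psi \<in> insert psit Psi \<Longrightarrow> set_pmf (D psi) \<subseteq> {x. models x psi}"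
    and rep: "\<And>h. h \<in> hyp_class phis \<Longrightarrow> representative Psi psit hstar h"
    and fin: "finite Psi"
    and cov: "\<And>psi x. psi \<in> Psi \<Longrightarrow> models x psi \<Longrightarrow> x \<in> set (S psi)"
    and h: "h \<in> hyp_class phis"
    and hmin: "\<forall>h'\<in>hyp_class phis. (\<Sum>psi\<in>Psi. emp_loss hstar S psi h) \<le> (\<Sum>psi\<in>Psi. emp_loss hstar S psi h')"
  shows "true_loss D hstar psit h = 0" "(\<Sum>psi\<in>Psi. emp_loss hstar S psi h) = 0"
proof -
  have nn: "emp_loss hstar S psi h \<ge> 0" for psi
    unfolding emp_loss_def by (intro divide_nonneg_nonneg sum_list_nonneg) auto
  have "(\<Sum>psi\<in>Psi. emp_loss hstar S psi h) \<le> (\<Sum>psi\<in>Psi. emp_loss hstar S psi hstar)"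
    using hmin hstar by blast
  also have "\<dots> = 0" by (simp add: emp_loss_def)
  moreover have "0 \<le> (\<Sum>psi\<in>Psi. emp_loss hstar S psi h)" by (intro sum_nonneg nn)
  ultimately have s0: "(\<Sum>psi\<in>Psi. emp_loss hstar S psi h) = 0" by linarith
  then show "(\<Sum>psi\<in>Psi. emp_loss hstar S psi h) = 0" .
  have e0: "emp_loss hstar S psi h = 0" if "psi \<in> Psi" for psi
    using s0 sum_nonneg_eq_0_iff[OF fin, of "\<lambda>psi. emp_loss hstar S psi h"] nn that by blast
  have agree: "h x psi = hstar x psi" if "psi \<in> Psi" "models x psi" for psi x
  proof -
    have "(if h x psi \<noteq> hstar x psi then 1 else 0 :: real) = 0"
      using emp_zero_agree[of "\<lambda>x. if h x psi \<noteq> hstar x psi then 1 else 0 :: real" "S psi" x]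
        e0[OF that(1)] cov[OF that] unfolding emp_loss_def by auto
    then show ?thesis by (auto split: if_splits)
  qed
  have term0: "(if h x psit \<noteq> hstar x psit then 1 else 0) * pmf (D psit) x = 0" for x
  proof (cases "pmf (D psit) x = 0")
    case False
    then have "x \<in> set_pmf (D psit)" by (simp add: set_pmf_iff)
    then have mx: "models x psit" using D_supp[of psit] by auto
    have "h x psit = hstar x psit"
    proof (rule ccontr)
      assume ne: "h x psit \<noteq> hstar x psit"
      from rep[OF h] mx have "count_rep Psi hstar h psit x > 0" unfolding representative_def by blast
      then have "{psi' \<in> Psi. chi hstar h psit x psi'} \<noteq> {}"
        unfolding count_rep_def by (intro notI) simp
      then obtain psi' where p1: "psi' \<in> Psi" and p2: "chi hstar h psit x psi'" by blast
      from p2 ne have "models x psi'" "h x psi' \<noteq> hstar x psi'" unfolding chi_def by simp_all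
      with agree[OF p1] show False by blast
    qed
    then show ?thesis by simp
  qed simp
  show "true_loss D hstar psit h = 0" unfolding true_loss_def by (rule sum.neutral) (use term0 in blast)
qed

theorem theorem4:
  fixes phis :: "'v::finite form list"
    and Psi :: "'v form set"
    and psit :: "'v form"
    and D :: "'v form \<Rightarrow> ('v \<Rightarrow> bool) pmf"
    and hstar :: "('v \<Rightarrow> bool) \<Rightarrow> 'v form \<Rightarrow> bool"
  assumes hstar: "hstar \<in> hyp_class phis"
    and fin: "finite Psi"
    and D_supp: "\<And>psi. psi \<in> insert psit Psi \<Longrightarrow> set_pmf (D psi) \<subseteq> {x. models x psi}"
    and D_pos: "\<And>psi x. psi \<in> Psi \<Longrightarrow> models x psi \<Longrightarrow> pmf (D psi) x > 0"
    and rep: "\<And>h. h \<in> hyp_class phis \<Longrightarrow> representative Psi psit hstar h"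
  shows "\<forall>\<epsilon> \<delta>. 0 < \<epsilon> \<and> \<epsilon> < 1 \<and> 0 < \<delta> \<and> \<delta> < 1 \<longrightarrow>
          (\<exists>t :: 'v form \<Rightarrow> nat. \<forall>k :: 'v form \<Rightarrow> nat. (\<forall>psi\<in>Psi. t psi \<le> k psi) \<longrightarrow>
             measure_pmf.prob (sample_pmf Psi D k)
               {S. \<exists>h\<in>hyp_class phis.
                     (\<forall>h'\<in>hyp_class phis. (\<Sum>psi\<in>Psi. emp_loss hstar S psi h) \<le> (\<Sum>psi\<in>Psi. emp_loss hstar S psi h')) \<and>
                     true_loss D hstar psit h > (\<Sum>psi\<in>Psi. emp_loss hstar S psi h) + \<epsilon>} < \<delta>
           \<and> ((\<exists>h'\<in>hyp_class phis. \<forall>S. (\<Sum>psi\<in>Psi. emp_loss hstar S psi h') = 0) \<longrightarrow>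
              measure_pmf.prob (sample_pmf Psi D k)
               {S. \<exists>h\<in>hyp_class phis.
                     (\<forall>h'\<in>hyp_class phis. (\<Sum>psi\<in>Psi. emp_loss hstar S psi h) \<le> (\<Sum>psi\<in>Psi. emp_loss hstar S psi h')) \<and>
                     true_loss D hstar psit h > \<epsilon>} < \<delta>))"
  proof (intro allI impI)
  fix \<epsilon> \<delta> :: real
  assume ed: "0 < \<epsilon> \<and> \<epsilon> < 1 \<and> 0 < \<delta> \<and> \<delta> < 1"
  define P where "P = {(psi, x). psi \<in> Psi \<and> models x psi}"
  have finP: "finite P"
    by (rule finite_subset[of _ "Psi \<times> UNIV"]) (auto simp: P_def fin)
  define N where "N = card P"
  define q where "q = Max (insert 0 ((\<lambda>(psi, x). 1 - pmf (D psi) x) ` P))"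
  have q0: "0 \<le> q" unfolding q_def using finP by simp
  have q1: "q < 1" unfolding q_def using finP
  proof (subst Max_less_iff)
    show "\<forall>a\<in>insert 0 ((\<lambda>(psi, x). 1 - pmf (D psi) x) ` P). a < 1"
    proof
      fix a assume "a \<in> insert 0 ((\<lambda>(psi, x). 1 - pmf (D psi) x) ` P)"
      then consider "a = 0" | psi x where "(psi, x) \<in> P" "a = 1 - pmf (D psi) x" by auto
      then show "a < 1"
      proof cases
        case 2
        then have "pmf (D psi) x > 0" using D_pos unfolding P_def by blast
        then show ?thesis using 2 by simp
      qed simp
    qed
  qed simp_all
  have qge: "1 - pmf (D psi) x \<le> q" if "(psi, x) \<in> P" for psi x
    unfolding q_def using finP that by (intro Max_ge) force+
  have "\<delta> / (real N + 1) > 0" using ed by simp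
  then obtain n where n: "q ^ n < \<delta> / (real N + 1)" using real_arch_pow_inv q1 by blast
  show "\<exists>t :: 'v form \<Rightarrow> nat. \<forall>k :: 'v form \<Rightarrow> nat. (\<forall>psi\<in>Psi. t psi \<le> k psi) \<longrightarrow>
             measure_pmf.prob (sample_pmf Psi D k)
               {S. \<exists>h\<in>hyp_class phis.
                     (\<forall>h'\<in>hyp_class phis. (\<Sum>psi\<in>Psi. emp_loss hstar S psi h) \<le> (\<Sum>psi\<in>Psi. emp_loss hstar S psi h')) \<and>
                     true_loss D hstar psit h > (\<Sum>psi\<in>Psi. emp_loss hstar S psi h) + \<epsilon>} < \<delta>
           \<and> ((\<exists>h'\<in>hyp_class phis. \<forall>S. (\<Sum>psi\<in>Psi. emp_loss hstar S psi h') = 0) \<longrightarrow>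
              measure_pmf.prob (sample_pmf Psi D k)
               {S. \<exists>h\<in>hyp_class phis.
                     (\<forall>h'\<in>hyp_class phis. (\<Sum>psi\<in>Psi. emp_loss hstar S psi h) \<le> (\<Sum>psi\<in>Psi. emp_loss hstar S psi h')) \<and>
                     true_loss D hstar psit h > \<epsilon>} < \<delta>)"
  proof (intro exI[of _ "\<lambda>_. n"] allI impI)
    fix k :: "'v form \<Rightarrow> nat"
    assume kn: "\<forall>psi\<in>Psi. n \<le> k psi"
    define M where "M = sample_pmf Psi D k"
    define B where "B = (\<Union>px\<in>P. {S. snd px \<notin> set (S (fst px))})"
    have each: "measure_pmf.prob M {S. snd px \<notin> set (S (fst px))} \<le> q ^ n" if px: "px \<in> P" for px
    proof -
      obtain psi x where pe: "px = (psi, x)" by (cases px)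
      have psi: "psi \<in> Psi" using px pe by (auto simp: P_def)
      have "measure_pmf.prob M {S. snd px \<notin> set (S (fst px))}
          = measure_pmf.prob (map_pmf (\<lambda>f. f psi) M) {xs. x \<notin> set xs}"
        by (simp add: measure_map_pmf pe vimage_def)
      also have "\<dots> = measure_pmf.prob (replicate_pmf (k psi) (D psi)) {xs. x \<notin> set xs}"
        unfolding M_def sample_pmf_def by (subst Pi_pmf_component[OF fin]) (simp add: psi)
      also have "\<dots> = (1 - pmf (D psi) x) ^ k psi" by (rule prob_replicate_miss)
      also have "\<dots> \<le> q ^ k psi"
      proof -
        have "0 \<le> 1 - pmf (D psi) x" using pmf_le_1[of "D psi" x] by simp
        moreover have "(psi, x) \<in> P" using px pe by simp
        ultimately show ?thesis by (intro power_mono qge)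
      qed
      also have "\<dots> \<le> q ^ n" using kn psi q0 q1 by (intro power_decreasing) auto
      finally show ?thesis .
    qed
    have "measure_pmf.prob M B \<le> (\<Sum>px\<in>P. measure_pmf.prob M {S. snd px \<notin> set (S (fst px))})"
      unfolding B_def by (rule measure_pmf.finite_measure_subadditive_finite[OF finP]) auto
    also have "\<dots> \<le> (\<Sum>px\<in>P. q ^ n)" by (rule sum_mono) (rule each)
    also have "\<dots> = real N * q ^ n" by (simp add: N_def)
    also have "\<dots> \<le> real N * (\<delta> / (real N + 1))" using n by (intro mult_left_mono) auto
    also have "\<dots> < \<delta>" using ed by (simp add: field_simps)
    finally have PB: "measure_pmf.prob M B < \<delta>" .
    have cover: "S \<in> B" if "h \<in> hyp_class phis"
        "\<forall>h'\<in>hyp_class phis. (\<Sum>psi\<in>Psi. emp_loss hstar S psi h) \<le> (\<Sum>psi\<in>Psi. emp_loss hstar S psi h')"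
        "true_loss D hstar psit h \<noteq> 0 \<or> (\<Sum>psi\<in>Psi. emp_loss hstar S psi h) \<noteq> 0" for S h
    proof (rule ccontr)
      assume "S \<notin> B"
      then have cov: "\<And>psi x. psi \<in> Psi \<Longrightarrow> models x psi \<Longrightarrow> x \<in> set (S psi)"
        unfolding B_def P_def by auto
      have "true_loss D hstar psit h = 0" "(\<Sum>psi\<in>Psi. emp_loss hstar S psi h) = 0"
        using bad_subset[OF hstar D_supp rep fin cov that(1,2)] by blast+
      then show False using that(3) by simp
    qed
    have s1: "{S. \<exists>h\<in>hyp_class phis.
                     (\<forall>h'\<in>hyp_class phis. (\<Sum>psi\<in>Psi. emp_loss hstar S psi h) \<le> (\<Sum>psi\<in>Psi. emp_loss hstar S psi h')) \<and>
                     true_loss D hstar psit h > (\<Sum>psi\<in>Psi. emp_loss hstar S psi h) + \<epsilon>} \<subseteq> B"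
    proof
      fix S assume "S \<in> {S. \<exists>h\<in>hyp_class phis.
                     (\<forall>h'\<in>hyp_class phis. (\<Sum>psi\<in>Psi. emp_loss hstar S psi h) \<le> (\<Sum>psi\<in>Psi. emp_loss hstar S psi h')) \<and>
                     true_loss D hstar psit h > (\<Sum>psi\<in>Psi. emp_loss hstar S psi h) + \<epsilon>}"
      then obtain h where h: "h \<in> hyp_class phis"
        "\<forall>h'\<in>hyp_class phis. (\<Sum>psi\<in>Psi. emp_loss hstar S psi h) \<le> (\<Sum>psi\<in>Psi. emp_loss hstar S psi h')"
        "true_loss D hstar psit h > (\<Sum>psi\<in>Psi. emp_loss hstar S psi h) + \<epsilon>" by blast
      have "true_loss D hstar psit h \<noteq> 0 \<or> (\<Sum>psi\<in>Psi. emp_loss hstar S psi h) \<noteq> 0"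
      proof (rule ccontr)
        assume "\<not> ?thesis"
        then show False using h(3) ed by simp
      qed
      then show "S \<in> B" using cover[OF h(1,2)] by blast
    qed
    have s2: "{S. \<exists>h\<in>hyp_class phis.
                     (\<forall>h'\<in>hyp_class phis. (\<Sum>psi\<in>Psi. emp_loss hstar S psi h) \<le> (\<Sum>psi\<in>Psi. emp_loss hstar S psi h')) \<and>
                     true_loss D hstar psit h > \<epsilon>} \<subseteq> B"
    proof
      fix S assume "S \<in> {S. \<exists>h\<in>hyp_class phis.
                     (\<forall>h'\<in>hyp_class phis. (\<Sum>psi\<in>Psi. emp_loss hstar S psi h) \<le> (\<Sum>psi\<in>Psi. emp_loss hstar S psi h')) \<and>
                     true_loss D hstar psit h > \<epsilon>}"
      then obtain h where h: "h \<in> hyp_class phis"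
        "\<forall>h'\<in>hyp_class phis. (\<Sum>psi\<in>Psi. emp_loss hstar S psi h) \<le> (\<Sum>psi\<in>Psi. emp_loss hstar S psi h')"
        "true_loss D hstar psit h > \<epsilon>" by blast
      have "true_loss D hstar psit h \<noteq> 0 \<or> (\<Sum>psi\<in>Psi. emp_loss hstar S psi h) \<noteq> 0"
      proof (rule ccontr)
        assume "\<not> ?thesis"
        then show False using h(3) ed by simp
      qed
      then show "S \<in> B" using cover[OF h(1,2)] by blast
    qed
    show "measure_pmf.prob (sample_pmf Psi D k)
               {S. \<exists>h\<in>hyp_class phis.
                     (\<forall>h'\<in>hyp_class phis. (\<Sum>psi\<in>Psi. emp_loss hstar S psi h) \<le> (\<Sum>psi\<in>Psi. emp_loss hstar S psi h')) \<and>
                     true_loss D hstar psit h > (\<Sum>psi\<in>Psi. emp_loss hstar S psi h) + \<epsilon>} < \<delta>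
           \<and> ((\<exists>h'\<in>hyp_class phis. \<forall>S. (\<Sum>psi\<in>Psi. emp_loss hstar S psi h') = 0) \<longrightarrow>
              measure_pmf.prob (sample_pmf Psi D k)
               {S. \<exists>h\<in>hyp_class phis.
                     (\<forall>h'\<in>hyp_class phis. (\<Sum>psi\<in>Psi. emp_loss hstar S psi h) \<le> (\<Sum>psi\<in>Psi. emp_loss hstar S psi h')) \<and>
                     true_loss D hstar psit h > \<epsilon>} < \<delta>)"
    proof -
      have a: "measure_pmf.prob M {S. \<exists>h\<in>hyp_class phis.
                     (\<forall>h'\<in>hyp_class phis. (\<Sum>psi\<in>Psi. emp_loss hstar S psi h) \<le> (\<Sum>psi\<in>Psi. emp_loss hstar S psi h')) \<and>
                     true_loss D hstar psit h > (\<Sum>psi\<in>Psi. emp_loss hstar S psi h) + \<epsilon>} \<le> measure_pmf.prob M B"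
        by (rule measure_pmf.finite_measure_mono[OF s1]) simp
      have b: "measure_pmf.prob M {S. \<exists>h\<in>hyp_class phis.
                     (\<forall>h'\<in>hyp_class phis. (\<Sum>psi\<in>Psi. emp_loss hstar S psi h) \<le> (\<Sum>psi\<in>Psi. emp_loss hstar S psi h')) \<and>
                     true_loss D hstar psit h > \<epsilon>} \<le> measure_pmf.prob M B"
        by (rule measure_pmf.finite_measure_mono[OF s2]) simp
      show ?thesis using a b PB unfolding M_def[symmetric] by linarith
    qed
  qed
qed

end
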